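(* Let $h:\mathbb{R}\to\mathbb{R}$ be continuous and let $u_1,u_2$ be any pair of real-valued linearly independent solutions of $u''(x)+h(x)u(x)=0$, with Wronskian $W=u'_1(x)u_2(x)-u_1(x)u'_2(x)\neq0$. Let $X_0\in\mathbb{R}$ and fix either choice of sign $\pm$. Then the map $(x,\varPhi)\mapsto(X,Y)$ given by \[ X(x,\varPhi)=X_0\pm W^{-1}\frac{\varPhi^2u_1(x)u_2(x)+u'_1(x)u'_2(x)}{\varPhi^2[u_1(x)]^2+[u'_1(x)]^2},\qquad Y(x,\varPhi)=\frac{\varPhi}{\varPhi^2[u_1(x)]^2+[u'_1(x)]^2}, \] is a local diffeomorphism from the Riemannian manifold $\mathbb{M}_h=(\mathcal{H}_0,g_h)$ to the Poincaré upper half plane $\mathbb{H}=(\mathcal{H},g_{\mathbb{H}})$, i.e. a local diffeomorphism $\mathcal{H}_0\to\mathcal{H}$ under which $g_{\mathbb{H}}$ pulls back to $g_h$.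
   Context: $\mathcal{H}=\{(X,Y)\in\mathbb{R}^2\mid Y>0\}$ with metric $g_{\mathbb{H}}=(dX^2+dY^2)/Y^2$ is the Poincaré upper half plane $\mathbb{H}$. $\mathcal{H}_0=\{(x,\varPhi)\in\mathbb{R}^2\mid\varPhi>0,\ \varPhi^2\neq h(x)\}$ with metric $g_h=\left[(h(x)-\varPhi^2)^2dx^2+d\varPhi^2\right]/\varPhi^2$ is $\mathbb{M}_h$. *)

theory Defs
  imports "HOL-Analysis.Analysis"
begin

definition upper_half_plane :: "(real \<times> real) set" where
  "upper_half_plane = {(X, Y). Y > 0}"

definition H0_set :: "(real \<Rightarrow> real) \<Rightarrow> (real \<times> real) set" where
  "H0_set h = {(x, \<Phi>). \<Phi> > 0 \<and> \<Phi>\<^sup>2 \<noteq> h x}"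

definition g_poincare :: "real \<times> real \<Rightarrow> real \<times> real \<Rightarrow> real \<times> real \<Rightarrow> real" where
  "g_poincare p v w = (fst v * fst w + snd v * snd w) / (snd p)\<^sup>2"

definition g_h :: "(real \<Rightarrow> real) \<Rightarrow> real \<times> real \<Rightarrow> real \<times> real \<Rightarrow> real \<times> real \<Rightarrow> real" where
  "g_h h p v w = ((h (fst p) - (snd p)\<^sup>2)\<^sup>2 * fst v * fst w + snd v * snd w) / (snd p)\<^sup>2"

definition C1_on :: "'a::real_normed_vector set \<Rightarrow> ('a \<Rightarrow> 'b::real_normed_vector) \<Rightarrow> bool" where
  "C1_on U f \<longleftrightarrow> (\<exists>f' :: 'a \<Rightarrow> ('a \<Rightarrow>\<^sub>L 'b).
      (\<forall>x\<in>U. (f has_derivative blinfun_apply (f' x)) (at x)) \<and> continuous_on U f')"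

definition local_diffeo :: "('a::euclidean_space \<Rightarrow> 'b::euclidean_space) \<Rightarrow> 'a set \<Rightarrow> 'b set \<Rightarrow> bool" where
  "local_diffeo F S T \<longleftrightarrow> F ` S \<subseteq> T \<and>
     (\<forall>p\<in>S. \<exists>U V G. open U \<and> p \<in> U \<and> U \<subseteq> S \<and> open V \<and> V \<subseteq> T \<and>
        F ` U = V \<and> G ` V = U \<and> (\<forall>x\<in>U. G (F x) = x) \<and> (\<forall>y\<in>V. F (G y) = y) \<and>
        C1_on U F \<and> C1_on V G)"

definition pullback_metric_eq ::
  "(real \<times> real \<Rightarrow> real \<times> real) \<Rightarrow> (real \<Rightarrow> real) \<Rightarrow> (real \<times> real) set \<Rightarrow> bool" where
  "pullback_metric_eq F h S \<longleftrightarrow> (\<forall>p\<in>S. \<exists>D. (F has_derivative D) (at p) \<and>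
      (\<forall>v w. g_poincare (F p) (D v) (D w) = g_h h p v w))"

end

theory Submission
  imports Defs
begin

lemma dcomp:
  assumes "\<And>x. (g has_real_derivative g' x) (at x)"
  shows "((\<lambda>q. g (fst q)) has_derivative (\<lambda>v. g' (fst p) * fst v)) (at p within S)"
proof -
  have "(g has_derivative (\<lambda>v. g' (fst p) * v)) (at (fst p))"
    using assms[of "fst p"] by (simp add: has_field_derivative_def)
  from has_derivative_compose[OF has_derivative_fst[OF has_derivative_ident] this]
  show ?thesis by (simp add: o_def)
qed

lemma alg3:
  fixes P a1 b1 hh v1 v2 Dn :: real
  assumes dn: "P\<^sup>2 * a1\<^sup>2 + b1\<^sup>2 = Dn" and D: "Dn \<noteq> 0"
  shows "v2 / Dn - P * (inverse Dn * (P\<^sup>2 * (2 * (b1 * v1) * a1) + 2 * v2 * P * a1\<^sup>2 - 2 * (hh * a1 * v1) * b1) * inverse Dn)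
     = (b1\<^sup>2 - P\<^sup>2 * a1\<^sup>2) * v2 / Dn\<^sup>2 - (P\<^sup>2 - hh) * (2 * P * a1 * b1) * v1 / Dn\<^sup>2"
proof -
  have "v2 / Dn - P * (inverse Dn * (P\<^sup>2 * (2 * (b1 * v1) * a1) + 2 * v2 * P * a1\<^sup>2 - 2 * (hh * a1 * v1) * b1) * inverse Dn)
     = (v2 * Dn - P * (P\<^sup>2 * (2 * (b1 * v1) * a1) + 2 * v2 * P * a1\<^sup>2 - 2 * (hh * a1 * v1) * b1)) / Dn\<^sup>2"
    using D by (simp add: field_simps power2_eq_square)
  also have "v2 * Dn - P * (P\<^sup>2 * (2 * (b1 * v1) * a1) + 2 * v2 * P * a1\<^sup>2 - 2 * (hh * a1 * v1) * b1)
      = - ((P\<^sup>2 - hh) * (2 * P * a1 * b1)) * v1 + (b1\<^sup>2 - P\<^sup>2 * a1\<^sup>2) * v2"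
    unfolding dn[symmetric] by (simp add: algebra_simps power2_eq_square)
  also have "(- ((P\<^sup>2 - hh) * (2 * P * a1 * b1)) * v1 + (b1\<^sup>2 - P\<^sup>2 * a1\<^sup>2) * v2) / Dn\<^sup>2
     = (b1\<^sup>2 - P\<^sup>2 * a1\<^sup>2) * v2 / Dn\<^sup>2 - (P\<^sup>2 - hh) * (2 * P * a1 * b1) * v1 / Dn\<^sup>2"
    by (simp add: diff_divide_distrib add_divide_distrib)
  finally show ?thesis .
qed

lemma alg1:
  fixes P a1 b1 a2 b2 hh W s v1 v2 Dn :: real
  assumes w: "b1 * a2 - a1 * b2 = W" and Wn: "W \<noteq> 0" and dn: "P\<^sup>2 * a1\<^sup>2 + b1\<^sup>2 = Dn" and D: "Dn \<noteq> 0"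
  shows "s * inverse W *
        ((- (P\<^sup>2 * a1 * a2) - b1 * b2) *
         (inverse Dn *
          (P\<^sup>2 * (2 * (v1 * b1) * a1) + 2 * v2 * P * a1\<^sup>2 - 2 * (v1 * (hh * a1)) * b1) *
          inverse Dn) +
         (P\<^sup>2 * a1 * (v1 * b2) + (P\<^sup>2 * (v1 * b1) + 2 * v2 * P * a1) * a2 +
          (- (b1 * (v1 * (hh * a2))) - v1 * (hh * a1) * b2)) /
         Dn)
    = s * (P\<^sup>2 - hh) * (b1\<^sup>2 - P\<^sup>2 * a1\<^sup>2) / Dn\<^sup>2 * v1
      + s * (2 * P * a1 * b1) / Dn\<^sup>2 * v2"
proof -
  define X where "X = (- (P\<^sup>2 * a1 * a2) - b1 * b2) * (P\<^sup>2 * (2 * (v1 * b1) * a1) + 2 * v2 * P * a1\<^sup>2 - 2 * (v1 * (hh * a1)) * b1) +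
         (P\<^sup>2 * a1 * (v1 * b2) + (P\<^sup>2 * (v1 * b1) + 2 * v2 * P * a1) * a2 +
          (- (b1 * (v1 * (hh * a2))) - v1 * (hh * a1) * b2)) * Dn"
  define R where "R = (P\<^sup>2 - hh) * (b1\<^sup>2 - P\<^sup>2 * a1\<^sup>2) * v1 + (2 * P * a1 * b1) * v2"
  have e: "X = W * R"
    unfolding X_def R_def w[symmetric] dn[symmetric] by (simp add: algebra_simps power2_eq_square)
  have inner: "((- (P\<^sup>2 * a1 * a2) - b1 * b2) *
         (inverse Dn *
          (P\<^sup>2 * (2 * (v1 * b1) * a1) + 2 * v2 * P * a1\<^sup>2 - 2 * (v1 * (hh * a1)) * b1) *
          inverse Dn) +
         (P\<^sup>2 * a1 * (v1 * b2) + (P\<^sup>2 * (v1 * b1) + 2 * v2 * P * a1) * a2 +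
          (- (b1 * (v1 * (hh * a2))) - v1 * (hh * a1) * b2)) /
         Dn) = X / Dn\<^sup>2"
    unfolding X_def using D by (simp add: field_simps power2_eq_square)
  have rhs: "s * (P\<^sup>2 - hh) * (b1\<^sup>2 - P\<^sup>2 * a1\<^sup>2) / Dn\<^sup>2 * v1
      + s * (2 * P * a1 * b1) / Dn\<^sup>2 * v2 = s * R / Dn\<^sup>2"
    unfolding R_def using D by (simp add: field_simps)
  show ?thesis unfolding inner rhs e using Wn by simp
qed

definition E11 :: "(real \<times> real) \<Rightarrow>\<^sub>L (real \<times> real)" where "E11 = Blinfun (\<lambda>v. (fst v, 0))"
definition E12 :: "(real \<times> real) \<Rightarrow>\<^sub>L (real \<times> real)" where "E12 = Blinfun (\<lambda>v. (snd v, 0))"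
definition E21 :: "(real \<times> real) \<Rightarrow>\<^sub>L (real \<times> real)" where "E21 = Blinfun (\<lambda>v. (0, fst v))"
definition E22 :: "(real \<times> real) \<Rightarrow>\<^sub>L (real \<times> real)" where "E22 = Blinfun (\<lambda>v. (0, snd v))"
definition mat2 :: "real \<Rightarrow> real \<Rightarrow> real \<Rightarrow> real \<Rightarrow> (real \<times> real) \<Rightarrow>\<^sub>L (real \<times> real)" where
  "mat2 a b c d = a *\<^sub>R E11 + b *\<^sub>R E12 + c *\<^sub>R E21 + d *\<^sub>R E22"

lemma mat2_apply [simp]: "blinfun_apply (mat2 a b c d) v = (a * fst v + b * snd v, c * fst v + d * snd v)"
proof -
  have l1: "bounded_linear (\<lambda>v::real\<times>real. (fst v, 0::real))"
    by (intro bounded_linear_Pair bounded_linear_fst bounded_linear_zero bounded_linear_ident)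
  have l2: "bounded_linear (\<lambda>v::real\<times>real. (snd v, 0::real))"
    by (intro bounded_linear_Pair bounded_linear_snd bounded_linear_zero bounded_linear_ident)
  have l3: "bounded_linear (\<lambda>v::real\<times>real. (0::real, fst v))"
    by (intro bounded_linear_Pair bounded_linear_fst bounded_linear_zero bounded_linear_ident)
  have l4: "bounded_linear (\<lambda>v::real\<times>real. (0::real, snd v))"
    by (intro bounded_linear_Pair bounded_linear_snd bounded_linear_zero bounded_linear_ident)
  show ?thesis
    by (simp add: mat2_def E11_def E12_def E21_def E22_def blinfun.add_left blinfun.scaleR_left bounded_linear_Blinfun_apply[OF l1]
        bounded_linear_Blinfun_apply[OF l2] bounded_linear_Blinfun_apply[OF l3] bounded_linear_Blinfun_apply[OF l4])
qed

lemma mat2_cont [continuous_intros]: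
  "continuous_on S a \<Longrightarrow> continuous_on S b \<Longrightarrow> continuous_on S c \<Longrightarrow> continuous_on S d \<Longrightarrow>
   continuous_on S (\<lambda>p. mat2 (a p) (b p) (c p) (d p))"
  unfolding mat2_def by (intro continuous_intros)

lemma mat2_comp: "mat2 a b c d o\<^sub>L mat2 a' b' c' d' = mat2 (a*a'+b*c') (a*b'+b*d') (c*a'+d*c') (c*b'+d*d')"
  by (rule blinfun_eqI) (simp add: algebra_simps)

lemma mat2_id: "mat2 1 0 0 1 = id_blinfun"
  by (rule blinfun_eqI) simp

lemma alg4:
  fixes A B D s k :: real
  assumes AB: "A\<^sup>2 + B\<^sup>2 = D\<^sup>2" and s: "s\<^sup>2 = 1" and k: "k \<noteq> 0" and D: "D \<noteq> 0"
  shows "mat2 (s * A / k) (- B / k) (s * B) A o\<^sub>L mat2 (s * k * A / D\<^sup>2) (s * B / D\<^sup>2) (- (k * B) / D\<^sup>2) (A / D\<^sup>2) = id_blinfun"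
    and "mat2 (s * k * A / D\<^sup>2) (s * B / D\<^sup>2) (- (k * B) / D\<^sup>2) (A / D\<^sup>2) o\<^sub>L mat2 (s * A / k) (- B / k) (s * B) A = id_blinfun"
proof -
  have ss: "s * s = 1" using s by (simp add: power2_eq_square)
  have e1: "s * A / k * (s * k * A / D\<^sup>2) + - B / k * (- (k * B) / D\<^sup>2) = 1"
  proof -
    have "s * A / k * (s * k * A / D\<^sup>2) + - B / k * (- (k * B) / D\<^sup>2) = ((s * s) * A\<^sup>2 + B\<^sup>2) / D\<^sup>2"
      using k D by (simp add: field_simps power2_eq_square)
    then show ?thesis using AB D by (simp add: ss)
  qed
  have e2: "s * A / k * (s * B / D\<^sup>2) + - B / k * (A / D\<^sup>2) = 0"
  proof -
    have "s * A / k * (s * B / D\<^sup>2) + - B / k * (A / D\<^sup>2) = ((s * s) * A * B - A * B) / (k * D\<^sup>2)"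
      using k D by (simp add: field_simps power2_eq_square)
    then show ?thesis by (simp add: ss)
  qed
  have e3: "s * B * (s * k * A / D\<^sup>2) + A * (- (k * B) / D\<^sup>2) = 0"
  proof -
    have "s * B * (s * k * A / D\<^sup>2) + A * (- (k * B) / D\<^sup>2) = ((s * s) * k * A * B - k * A * B) / D\<^sup>2"
      using k D by (simp add: field_simps power2_eq_square)
    then show ?thesis by (simp add: ss)
  qed
  have e4: "s * B * (s * B / D\<^sup>2) + A * (A / D\<^sup>2) = 1"
  proof -
    have "s * B * (s * B / D\<^sup>2) + A * (A / D\<^sup>2) = ((s * s) * B\<^sup>2 + A\<^sup>2) / D\<^sup>2"
      using k D by (simp add: field_simps power2_eq_square)
    then show ?thesis using AB D by (simp add: ss add.commute)
  qed
  show "mat2 (s * A / k) (- B / k) (s * B) A o\<^sub>L mat2 (s * k * A / D\<^sup>2) (s * B / D\<^sup>2) (- (k * B) / D\<^sup>2) (A / D\<^sup>2) = id_blinfun"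
    unfolding mat2_comp e1 e2 e3 e4 mat2_id ..
  have f1: "s * k * A / D\<^sup>2 * (s * A / k) + s * B / D\<^sup>2 * (s * B) = 1"
  proof -
    have "s * k * A / D\<^sup>2 * (s * A / k) + s * B / D\<^sup>2 * (s * B) = ((s * s) * A\<^sup>2 + (s * s) * B\<^sup>2) / D\<^sup>2"
      using k D by (simp add: field_simps power2_eq_square)
    then show ?thesis using AB D by (simp add: ss)
  qed
  have f2: "s * k * A / D\<^sup>2 * (- B / k) + s * B / D\<^sup>2 * A = 0"
    using k D by (simp add: field_simps power2_eq_square)
  have f3: "- (k * B) / D\<^sup>2 * (s * A / k) + A / D\<^sup>2 * (s * B) = 0"
    using k D by (simp add: field_simps power2_eq_square)
  have f4: "- (k * B) / D\<^sup>2 * (- B / k) + A / D\<^sup>2 * A = 1"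
  proof -
    have "- (k * B) / D\<^sup>2 * (- B / k) + A / D\<^sup>2 * A = (B\<^sup>2 + A\<^sup>2) / D\<^sup>2"
      using k D by (simp add: field_simps power2_eq_square)
    then show ?thesis using AB D by (simp add: add.commute)
  qed
  show "mat2 (s * k * A / D\<^sup>2) (s * B / D\<^sup>2) (- (k * B) / D\<^sup>2) (A / D\<^sup>2) o\<^sub>L mat2 (s * A / k) (- B / k) (s * B) A = id_blinfun"
    unfolding mat2_comp f1 f2 f3 f4 mat2_id ..
qed

lemma alg2:
  fixes P hh A B Dn s v1 v2 w1 w2 :: real
  assumes AB: "A\<^sup>2 + B\<^sup>2 = Dn\<^sup>2" and s: "s\<^sup>2 = 1" and D: "Dn \<noteq> 0" and P: "P \<noteq> 0"
  shows "((s * (P\<^sup>2 - hh) * A / Dn\<^sup>2 * v1 + s * B / Dn\<^sup>2 * v2) * (s * (P\<^sup>2 - hh) * A / Dn\<^sup>2 * w1 + s * B / Dn\<^sup>2 * w2)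
        + (- ((P\<^sup>2 - hh) * B) / Dn\<^sup>2 * v1 + A / Dn\<^sup>2 * v2) * (- ((P\<^sup>2 - hh) * B) / Dn\<^sup>2 * w1 + A / Dn\<^sup>2 * w2))
        / (P / Dn)\<^sup>2 = ((hh - P\<^sup>2)\<^sup>2 * v1 * w1 + v2 * w2) / P\<^sup>2"
proof -
  have num: "(s * (P\<^sup>2 - hh) * A * v1 + s * B * v2) * (s * (P\<^sup>2 - hh) * A * w1 + s * B * w2)
        + (- ((P\<^sup>2 - hh) * B) * v1 + A * v2) * (- ((P\<^sup>2 - hh) * B) * w1 + A * w2)
        = Dn\<^sup>2 * ((hh - P\<^sup>2)\<^sup>2 * v1 * w1 + v2 * w2)"
    using AB s by algebra
  have "((s * (P\<^sup>2 - hh) * A / Dn\<^sup>2 * v1 + s * B / Dn\<^sup>2 * v2) * (s * (P\<^sup>2 - hh) * A / Dn\<^sup>2 * w1 + s * B / Dn\<^sup>2 * w2)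
        + (- ((P\<^sup>2 - hh) * B) / Dn\<^sup>2 * v1 + A / Dn\<^sup>2 * v2) * (- ((P\<^sup>2 - hh) * B) / Dn\<^sup>2 * w1 + A / Dn\<^sup>2 * w2))
      = ((s * (P\<^sup>2 - hh) * A * v1 + s * B * v2) * (s * (P\<^sup>2 - hh) * A * w1 + s * B * w2)
        + (- ((P\<^sup>2 - hh) * B) * v1 + A * v2) * (- ((P\<^sup>2 - hh) * B) * w1 + A * w2)) / (Dn\<^sup>2)\<^sup>2"
    using D by (simp add: field_simps)
  also have "\<dots> = ((hh - P\<^sup>2)\<^sup>2 * v1 * w1 + v2 * w2) / Dn\<^sup>2"
    unfolding num using D by (simp add: power2_eq_square)
  finally show ?thesis using D P by (simp add: field_simps)
qed

theorem lemma2p14: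
  fixes h u1 u2 u1' u2' :: "real \<Rightarrow> real" and W X0 s :: real
  assumes h_cont: "continuous_on UNIV h"
    and d1: "\<And>x. (u1 has_real_derivative u1' x) (at x)"
    and d1': "\<And>x. (u1' has_real_derivative (- h x * u1 x)) (at x)"
    and d2: "\<And>x. (u2 has_real_derivative u2' x) (at x)"
    and d2': "\<And>x. (u2' has_real_derivative (- h x * u2 x)) (at x)"
    and lin_indep: "\<And>a b. (\<forall>x. a * u1 x + b * u2 x = 0) \<Longrightarrow> a = 0 \<and> b = 0"
    and wronskian: "\<And>x. u1' x * u2 x - u1 x * u2' x = W"
    and W_nz: "W \<noteq> 0"
    and sign: "s = 1 \<or> s = -1"
  shows "let F = (\<lambda>(x, \<Phi>).
             (X0 + s * inverse W * ((\<Phi>\<^sup>2 * u1 x * u2 x + u1' x * u2' x) / (\<Phi>\<^sup>2 * (u1 x)\<^sup>2 + (u1' x)\<^sup>2)),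
              \<Phi> / (\<Phi>\<^sup>2 * (u1 x)\<^sup>2 + (u1' x)\<^sup>2)))
         in local_diffeo F (H0_set h) upper_half_plane \<and> pullback_metric_eq F h (H0_set h)"
proof -
  define F where "F = (\<lambda>(x::real, \<Phi>::real).
             (X0 + s * inverse W * ((\<Phi>\<^sup>2 * u1 x * u2 x + u1' x * u2' x) / (\<Phi>\<^sup>2 * (u1 x)\<^sup>2 + (u1' x)\<^sup>2)),
              \<Phi> / (\<Phi>\<^sup>2 * (u1 x)\<^sup>2 + (u1' x)\<^sup>2)))"
  define S where "S = H0_set h"
  define Dn where "Dn = (\<lambda>p::real\<times>real. (snd p)\<^sup>2 * (u1 (fst p))\<^sup>2 + (u1' (fst p))\<^sup>2)"
  define A where "A = (\<lambda>p::real\<times>real. (u1' (fst p))\<^sup>2 - (snd p)\<^sup>2 * (u1 (fst p))\<^sup>2)"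
  define B where "B = (\<lambda>p::real\<times>real. 2 * snd p * u1 (fst p) * u1' (fst p))"
  define k where "k = (\<lambda>p::real\<times>real. (snd p)\<^sup>2 - h (fst p))"
  define J where "J = (\<lambda>p. mat2 (s * k p * A p / (Dn p)\<^sup>2) (s * B p / (Dn p)\<^sup>2)
                              (- (k p * B p) / (Dn p)\<^sup>2) (A p / (Dn p)\<^sup>2))"
  define Ji where "Ji = (\<lambda>p. mat2 (s * A p / k p) (- B p / k p) (s * B p) (A p))"
  have s2: "s\<^sup>2 = 1" using sign by auto
  have AB: "(A p)\<^sup>2 + (B p)\<^sup>2 = (Dn p)\<^sup>2" for p
    unfolding A_def B_def Dn_def by (simp add: power2_eq_square algebra_simps)
  have Dpos: "Dn p > 0" if "snd p \<noteq> 0" for p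
  proof -
    have "u1 (fst p) \<noteq> 0 \<or> u1' (fst p) \<noteq> 0"
      using wronskian[of "fst p"] W_nz by auto
    then show ?thesis unfolding Dn_def using that
      by (auto intro: add_pos_nonneg add_nonneg_pos)
  qed
  have S_snd: "snd p > 0" "k p \<noteq> 0" if "p \<in> S" for p
    using that unfolding S_def H0_set_def k_def by auto
  have Fp: "F p = (X0 + s * inverse W * (((snd p)\<^sup>2 * u1 (fst p) * u2 (fst p) + u1' (fst p) * u2' (fst p)) / ((snd p)\<^sup>2 * (u1 (fst p))\<^sup>2 + (u1' (fst p))\<^sup>2)),
              snd p / ((snd p)\<^sup>2 * (u1 (fst p))\<^sup>2 + (u1' (fst p))\<^sup>2))" for p
    unfolding F_def by (simp add: case_prod_beta)
  have Fsnd: "snd (F p) = snd p / Dn p" for p unfolding Fp Dn_def by simp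
  have derF: "(F has_derivative blinfun_apply (J p)) (at p)" if "snd p \<noteq> 0" for p
  proof -
    have Dn0: "(snd p)\<^sup>2 * (u1 (fst p))\<^sup>2 + (u1' (fst p))\<^sup>2 \<noteq> 0"
      using Dpos[OF that] unfolding Dn_def by simp
    have FF: "F = (\<lambda>q. (X0 + s * inverse W * (((snd q)\<^sup>2 * u1 (fst q) * u2 (fst q) + u1' (fst q) * u2' (fst q)) / ((snd q)\<^sup>2 * (u1 (fst q))\<^sup>2 + (u1' (fst q))\<^sup>2)),
              snd q / ((snd q)\<^sup>2 * (u1 (fst q))\<^sup>2 + (u1' (fst q))\<^sup>2)))"
      using Fp by (intro ext) simp
    have JJ: "blinfun_apply (J p) = (\<lambda>v. ((s * k p * A p / (Dn p)\<^sup>2) * fst v + (s * B p / (Dn p)\<^sup>2) * snd v,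
                                      (- (k p * B p) / (Dn p)\<^sup>2) * fst v + (A p / (Dn p)\<^sup>2) * snd v))"
      unfolding J_def by (intro ext) simp
    have dX: "((\<lambda>q. X0 + s * inverse W * (((snd q)\<^sup>2 * u1 (fst q) * u2 (fst q) + u1' (fst q) * u2' (fst q)) / ((snd q)\<^sup>2 * (u1 (fst q))\<^sup>2 + (u1' (fst q))\<^sup>2)))
         has_derivative (\<lambda>v. (s * k p * A p / (Dn p)\<^sup>2) * fst v + (s * B p / (Dn p)\<^sup>2) * snd v)) (at p)"
      apply (rule has_derivative_eq_rhs)
       apply (rule derivative_eq_intros dcomp[OF d1] dcomp[OF d1'] dcomp[OF d2] dcomp[OF d2'] | simp add: Dn0)+
      apply (rule ext)
      subgoal for q
      unfolding k_def A_def B_def Dn_def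
      using alg1[OF wronskian W_nz refl Dn0, of s "fst q" "snd q" "h (fst p)"] by (simp add: algebra_simps)
      done
    have dY: "((\<lambda>q. snd q / ((snd q)\<^sup>2 * (u1 (fst q))\<^sup>2 + (u1' (fst q))\<^sup>2))
         has_derivative (\<lambda>v. (- (k p * B p) / (Dn p)\<^sup>2) * fst v + (A p / (Dn p)\<^sup>2) * snd v)) (at p)"
      apply (rule has_derivative_eq_rhs)
       apply (rule derivative_eq_intros dcomp[OF d1] dcomp[OF d1'] | simp add: Dn0)+
      apply (rule ext)
      apply (simp only: k_def A_def B_def Dn_def)
      apply (rule alg3[OF refl Dn0])
      done
    show ?thesis unfolding FF JJ by (rule has_derivative_Pair[OF dX dY])
  qed

  have cu1: "continuous_on UNIV u1" using d1 by (meson DERIV_isCont continuous_at_imp_continuous_on)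
  have cu1': "continuous_on UNIV u1'" using d1' by (meson DERIV_isCont continuous_at_imp_continuous_on)
  have cu1f: "continuous_on T (\<lambda>p::real\<times>real. u1 (fst p))" for T
    by (rule continuous_on_compose2[OF cu1 continuous_on_fst[OF continuous_on_id]]) auto
  have cu1'f: "continuous_on T (\<lambda>p::real\<times>real. u1' (fst p))" for T
    by (rule continuous_on_compose2[OF cu1' continuous_on_fst[OF continuous_on_id]]) auto
  have chf: "continuous_on T (\<lambda>p::real\<times>real. h (fst p))" for T
    by (rule continuous_on_compose2[OF h_cont continuous_on_fst[OF continuous_on_id]]) auto
  have cDn: "continuous_on T Dn" for T unfolding Dn_def by (intro continuous_intros cu1f cu1'f)
  have cA: "continuous_on T A" for T unfolding A_def by (intro continuous_intros cu1f cu1'f)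
  have cB: "continuous_on T B" for T unfolding B_def by (intro continuous_intros cu1f cu1'f)
  have ck: "continuous_on T k" for T unfolding k_def by (intro continuous_intros chf)
  have Dn_nz: "Dn p \<noteq> 0" if "p \<in> S" for p using Dpos[of p] S_snd[OF that] by auto
  have contJ: "continuous_on S J"
    unfolding J_def by (intro continuous_intros cDn cA cB ck) (auto simp: Dn_nz)
  have contJi: "continuous_on S Ji"
    unfolding Ji_def by (intro continuous_intros cDn cA cB ck) (auto simp: S_snd)
  have JiJ: "Ji p o\<^sub>L J p = id_blinfun" and JJi: "J p o\<^sub>L Ji p = id_blinfun" if "p \<in> S" for p
    unfolding J_def Ji_def using alg4[OF AB s2 S_snd(2)[OF that] Dn_nz[OF that]] by simp_all
  have inv_eq: "inv (blinfun_apply (J p)) = blinfun_apply (Ji p)" if "p \<in> S" for p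
  proof (rule inv_unique_comp)
    show "blinfun_apply (J p) \<circ> blinfun_apply (Ji p) = id"
      using arg_cong[OF JJi[OF that], of blinfun_apply] by (auto simp: fun_eq_iff)
    show "blinfun_apply (Ji p) \<circ> blinfun_apply (J p) = id"
      using arg_cong[OF JiJ[OF that], of blinfun_apply] by (auto simp: fun_eq_iff)
  qed
  have openS: "open S"
  proof -
    have "S = {p. 0 < snd p} \<inter> {p. (snd p)\<^sup>2 \<noteq> h (fst p)}"
      unfolding S_def H0_set_def by auto
    moreover have "open {p::real\<times>real. 0 < snd p}"
      by (intro open_Collect_less continuous_intros)
    moreover have "open {p::real\<times>real. (snd p)\<^sup>2 \<noteq> h (fst p)}"
      by (intro open_Collect_neq continuous_intros chf)
    ultimately show ?thesis by auto
  qed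
  have Fmap: "F p \<in> upper_half_plane" if "p \<in> S" for p
  proof -
    have "snd (F p) > 0" unfolding Fsnd using S_snd(1)[OF that] Dpos[of p] by simp
    then show ?thesis unfolding upper_half_plane_def by (cases "F p") simp
  qed
  have derS: "(F has_derivative blinfun_apply (J p)) (at p)" if "p \<in> S" for p
    using derF S_snd(1)[OF that] by auto
  have metric: "pullback_metric_eq F h S"
    unfolding pullback_metric_eq_def
  proof
    fix p assume p: "p \<in> S"
    have P0: "snd p \<noteq> 0" using S_snd(1)[OF p] by simp
    show "\<exists>D. (F has_derivative D) (at p) \<and> (\<forall>v w. g_poincare (F p) (D v) (D w) = g_h h p v w)"
    proof (intro exI conjI allI)
      show "(F has_derivative blinfun_apply (J p)) (at p)" by (rule derS[OF p])
      fix v w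
      show "g_poincare (F p) (blinfun_apply (J p) v) (blinfun_apply (J p) w) = g_h h p v w"
        apply (simp only: g_poincare_def g_h_def J_def mat2_apply fst_conv snd_conv Fsnd k_def)
        apply (rule alg2[OF AB s2 Dn_nz[OF p] P0])
        done
    qed
  qed
  have ld: "local_diffeo F S upper_half_plane"
    unfolding local_diffeo_def
  proof (intro conjI ballI)
    show "F ` S \<subseteq> upper_half_plane" using Fmap by auto
    fix p assume p: "p \<in> S"
    show "\<exists>U V G. open U \<and> p \<in> U \<and> U \<subseteq> S \<and> open V \<and> V \<subseteq> upper_half_plane \<and>
        F ` U = V \<and> G ` V = U \<and> (\<forall>x\<in>U. G (F x) = x) \<and> (\<forall>y\<in>V. F (G y) = y) \<and>
        C1_on U F \<and> C1_on V G"
    proof (rule inverse_function_theorem[OF openS derS contJ p JiJ[OF p]])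
    fix U' V g g' assume U': "open U'" "U' \<subseteq> S" "p \<in> U'" and V: "open V" "F p \<in> V"
      and hom: "homeomorphism U' V F g"
      and dg: "\<And>y. y \<in> V \<Longrightarrow> (g has_derivative (g' y)) (at y)"
      and g': "\<And>y. y \<in> V \<Longrightarrow> g' y = inv (blinfun_apply (J (g y)))"
      and "\<And>y. y \<in> V \<Longrightarrow> bij (blinfun_apply (J (g y)))"
    have h1: "\<forall>x\<in>U'. g (F x) = x" "F ` U' = V" "continuous_on U' F"
       "\<forall>y\<in>V. F (g y) = y" "g ` V = U'" "continuous_on V g"
      using hom unfolding homeomorphism_def by auto
    have gS: "g y \<in> S" if "y \<in> V" for y using h1(5) U'(2) that by auto
    show "\<exists>U V G. open U \<and> p \<in> U \<and> U \<subseteq> S \<and> open V \<and> V \<subseteq> upper_half_plane \<and>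
        F ` U = V \<and> G ` V = U \<and> (\<forall>x\<in>U. G (F x) = x) \<and> (\<forall>y\<in>V. F (G y) = y) \<and>
        C1_on U F \<and> C1_on V G"
    proof (intro exI conjI)
      show "V \<subseteq> upper_half_plane" using h1(2) U'(2) Fmap by auto
      show "C1_on U' F" unfolding C1_on_def
        using derS U'(2) continuous_on_subset[OF contJ U'(2)] by blast
      have "(\<forall>y\<in>V. (g has_derivative blinfun_apply (Ji (g y))) (at y)) \<and> continuous_on V (\<lambda>y. Ji (g y))"
      proof
        show "\<forall>y\<in>V. (g has_derivative blinfun_apply (Ji (g y))) (at y)"
        proof
          fix y assume y: "y \<in> V"
          show "(g has_derivative blinfun_apply (Ji (g y))) (at y)"
            using dg[OF y] unfolding g'[OF y] inv_eq[OF gS[OF y]] .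
        qed
        show "continuous_on V (\<lambda>y. Ji (g y))"
          by (rule continuous_on_compose2[OF contJi h1(6)]) (use gS in auto)
      qed
      then show "C1_on V g" unfolding C1_on_def by (intro exI[where x="\<lambda>y. Ji (g y)"])
      show "open U'" "p \<in> U'" "U' \<subseteq> S" "open V" "F ` U' = V" "g ` V = U'"
        "\<forall>x\<in>U'. g (F x) = x" "\<forall>y\<in>V. F (g y) = y" using U' V h1 by auto
    qed
    qed
  qed
  show ?thesis using ld metric unfolding F_def S_def Let_def by simp
qed
end
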